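(* Let $D$ be a non-commutative division ring with center $F$ and let $M$ be a maximal subgroup of $D^*$ containing some element $a\notin F$ that is algebraic over $F$. If $M$ is abelian, then $[D:F]<\infty$.
   Context: $D^*$ is the multiplicative group of $D$; maximal subgroup = proper subgroup maximal among proper subgroups. *)

theory Defs
  imports Main
begin

definition center :: "'a::division_ring set" where
  "center = {x. \<forall>y. x * y = y * x}"

definition units_set :: "'a::division_ring set" where
  "units_set = {x. x \<noteq> 0}"

definition mult_subgroup :: "'a::division_ring set \<Rightarrow> bool" where
  "mult_subgroup H \<longleftrightarrow> H \<subseteq> units_set \<and> 1 \<in> H
     \<and> (\<forall>x\<in>H. \<forall>y\<in>H. x * y \<in> H) \<and> (\<forall>x\<in>H. inverse x \<in> H)"

definition maximal_mult_subgroup :: "'a::division_ring set \<Rightarrow> bool" where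
  "maximal_mult_subgroup M \<longleftrightarrow> mult_subgroup M \<and> M \<noteq> units_set
     \<and> (\<forall>N. mult_subgroup N \<and> M \<subseteq> N \<and> N \<noteq> units_set \<longrightarrow> N = M)"

text \<open>a is algebraic over the center F: a is a root of a nonzero polynomial
  with coefficients in F (coefficients are central, so the side does not matter).\<close>
definition algebraic_over_center :: "'a::division_ring \<Rightarrow> bool" where
  "algebraic_over_center a \<longleftrightarrow> (\<exists>n c. (\<forall>i\<le>n. c i \<in> center) \<and> (\<exists>i\<le>n. c i \<noteq> 0)
     \<and> (\<Sum>i\<le>n. c i * a ^ i) = 0)"

definition finite_dim_over_center :: "'a::division_ring itself \<Rightarrow> bool" where
  "finite_dim_over_center _ \<longleftrightarrow> (\<exists>S::'a set. finite S \<and>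
     (\<forall>x::'a. \<exists>c. (\<forall>s\<in>S. c s \<in> center) \<and> x = (\<Sum>s\<in>S. c s * s)))"

end

theory Submission imports Defs begin

lemma centerI: "(\<And>y. x * y = y * x) \<Longrightarrow> x \<in> center"
  by (simp add: center_def)
lemma centerD: "x \<in> center \<Longrightarrow> x * y = y * x"
  by (simp add: center_def)

lemma commute_pow: fixes k a :: "'a::division_ring"
  assumes "k * a = a * k" shows "k * a ^ j = a ^ j * k"
proof (induction j)
  case 0 then show ?case by simp
next
  case (Suc j)
  have "k * a ^ Suc j = (k * a) * a ^ j" by (simp add: mult.assoc)
  also have "\<dots> = a * (k * a ^ j)" using assms by (simp add: mult.assoc)
  also have "\<dots> = a ^ Suc j * k" using Suc by (simp add: mult.assoc)
  finally show ?case .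
qed

lemma commute_inverse: fixes k a :: "'a::division_ring"
  assumes "k * a = a * k" shows "inverse k * a = a * inverse k"
proof (cases "k = 0")
  case True then show ?thesis by simp
next
  case False
  have "inverse k * a = inverse k * (a * k) * inverse k" using False by (simp add: mult.assoc)
  also have "\<dots> = inverse k * (k * a) * inverse k" using assms by simp
  also have "\<dots> = a * inverse k" using False by (simp add: mult.assoc[symmetric])
  finally show ?thesis .
qed

lemma center_sum: "(\<And>i. i \<in> I \<Longrightarrow> f i \<in> center) \<Longrightarrow> sum f I \<in> center"
  by (rule centerI) (simp add: sum_distrib_left sum_distrib_right centerD)

lemma center_inverse: "x \<in> center \<Longrightarrow> inverse x \<in> center"
  by (rule centerI) (metis centerD commute_inverse)

lemma center_mult: "x \<in> center \<Longrightarrow> y \<in> center \<Longrightarrow> x * y \<in> center"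
  by (rule centerI) (metis centerD mult.assoc)

lemma center_uminus: "x \<in> center \<Longrightarrow> - x \<in> center"
  by (rule centerI) (simp add: centerD)

locale setting =
  fixes a :: "'a::division_ring" and N :: nat and b :: "nat \<Rightarrow> 'a"
  assumes N1: "N \<ge> 1" and bc: "\<And>j. b j \<in> center"
    and red: "a ^ N = (\<Sum>j<N. b j * a ^ j)"
    and indep: "\<And>c. (\<forall>j<N. c j \<in> center) \<Longrightarrow> (\<Sum>j<N. c j * a ^ j) = 0 \<Longrightarrow> \<forall>j<N. c j = 0"
    and Kcomm: "\<And>k1 k2. k1 * a = a * k1 \<Longrightarrow> k2 * a = a * k2 \<Longrightarrow> k1 * k2 = k2 * k1"
begin

definition alpha :: "(nat \<Rightarrow> 'a) \<Rightarrow> 'a \<Rightarrow> 'a" where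
  "alpha e y = (\<Sum>j<N. e j * y * a ^ j)"

lemma alpha_add_y: "alpha e (y + z) = alpha e y + alpha e z"
  by (simp add: alpha_def distrib_left distrib_right sum.distrib)
lemma alpha_diff_y: "alpha e (y - z) = alpha e y - alpha e z"
  by (simp add: alpha_def left_diff_distrib right_diff_distrib sum_subtractf)
lemma alpha_zero_y[simp]: "alpha e 0 = 0"
  by (simp add: alpha_def)
lemma alpha_sum_y: "alpha e (\<Sum>i\<in>I. f i) = (\<Sum>i\<in>I. alpha e (f i))"
  unfolding alpha_def by (simp add: sum_distrib_left sum_distrib_right sum.swap[of _ I])
lemma alpha_rK: assumes "k * a = a * k" shows "alpha e (y * k) = alpha e y * k"
proof -
  have "e j * (y * k) * a ^ j = e j * y * a ^ j * k" for j
    using commute_pow[OF assms, of j] by (simp add: mult.assoc)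
  then show ?thesis by (simp add: alpha_def sum_distrib_right)
qed
lemma alpha_add_e: "alpha (\<lambda>j. e j + e' j) y = alpha e y + alpha e' y"
  by (simp add: alpha_def distrib_left distrib_right sum.distrib)
lemma alpha_diff_e: "alpha (\<lambda>j. e j - e' j) y = alpha e y - alpha e' y"
  by (simp add: alpha_def left_diff_distrib right_diff_distrib sum_subtractf)
lemma alpha_smul: "alpha (\<lambda>j. d * e j) y = d * alpha e y"
  by (simp add: alpha_def sum_distrib_left mult.assoc)
lemma alpha_cong: "(\<And>j. j < N \<Longrightarrow> e j = e' j) \<Longrightarrow> alpha e y = alpha e' y"
  by (simp add: alpha_def)
lemma alpha_id: "alpha (\<lambda>j. if j = 0 then 1 else 0) y = y"
proof -
  have "(\<Sum>j<N. (if j = 0 then 1 else 0) * y * a ^ j) = (\<Sum>j\<in>{0}. (if j = 0 then 1 else 0) * y * a ^ j)"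
    by (rule sum.mono_neutral_right) (use N1 in auto)
  then show ?thesis by (simp add: alpha_def)
qed

lemma alpha_ra: "\<exists>e'. \<forall>y. alpha e y * a = alpha e' y"
proof -
  define e' where "e' j = (if j = 0 then 0 else e (j - 1)) + e (N - 1) * b j" for j
  have "alpha e y * a = alpha e' y" for y
  proof -
    obtain M where NM: "N = Suc M" using N1 by (cases N) auto
    have "alpha e y * a = (\<Sum>j<N. e j * y * a ^ Suc j)"
      by (simp add: alpha_def sum_distrib_right mult.assoc power_commutes)
    also have "\<dots> = (\<Sum>j<M. e j * y * a ^ Suc j) + e M * y * a ^ N"
      by (simp add: NM)
    also have "e M * y * a ^ N = (\<Sum>j<N. e M * b j * y * a ^ j)"
      by (simp add: red sum_distrib_left mult.assoc centerD[OF bc])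
    also have "(\<Sum>j<M. e j * y * a ^ Suc j) = (\<Sum>j<N. (if j = 0 then 0 else e (j - 1)) * y * a ^ j)"
      unfolding NM sum.lessThan_Suc_shift by simp
    finally have *: "alpha e y * a = (\<Sum>j<N. (if j = 0 then 0 else e (j - 1)) * y * a ^ j) + (\<Sum>j<N. e M * b j * y * a ^ j)"
      by simp
    have "N - 1 = M" using NM by simp
    then have "alpha e' y = (\<Sum>j<N. (if j = 0 then 0 else e (j - 1)) * y * a ^ j) + (\<Sum>j<N. e M * b j * y * a ^ j)"
      unfolding alpha_def e'_def by (simp only: distrib_right sum.distrib)
    with * show ?thesis by simp
  qed
  then show ?thesis by blast
qed

lemma alpha_zero_e_aux:
  "\<forall>e. card {j. j < N \<and> e j \<noteq> 0} = s \<longrightarrow> (\<forall>y. alpha e y = 0) \<longrightarrow> (\<forall>j<N. e j = 0)"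
proof (induction s rule: less_induct)
  case (less s)
  show ?case
  proof (intro allI impI)
    fix e j assume cs: "card {j. j < N \<and> e j \<noteq> 0} = s" and z: "\<forall>y. alpha e y = 0" and jN: "j < N"
    show "e j = 0"
    proof (rule ccontr)
      assume ej: "e j \<noteq> 0"
      define e1 where "e1 i = inverse (e j) * e i" for i
      have z1: "alpha e1 y = 0" for y unfolding e1_def using z alpha_smul[of "inverse (e j)" e y] by simp
      have e1j: "e1 j = 1" using ej by (simp add: e1_def)
      have supp1: "{i. i < N \<and> e1 i \<noteq> 0} = {i. i < N \<and> e i \<noteq> 0}" using ej by (auto simp: e1_def)
      have cent: "e1 i \<in> center" if iN: "i < N" for i
      proof (rule centerI)
        fix w
        define e2 where "e2 i = e1 i * w - w * e1 i" for i
        have az2: "alpha e2 y = 0" for y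
        proof -
          have "alpha e2 y = alpha (\<lambda>i. e1 i * w) y - alpha (\<lambda>i. w * e1 i) y"
            unfolding e2_def by (rule alpha_diff_e)
          also have "alpha (\<lambda>i. e1 i * w) y = alpha e1 (w * y)"
            by (simp add: alpha_def mult.assoc)
          also have "alpha (\<lambda>i. w * e1 i) y = w * alpha e1 y" by (rule alpha_smul)
          finally show ?thesis using z1 by simp
        qed
        have sub: "{i. i < N \<and> e2 i \<noteq> 0} \<subseteq> {i. i < N \<and> e1 i \<noteq> 0} - {j}"
          by (auto simp: e2_def e1j)
        have fin: "finite {i. i < N \<and> e1 i \<noteq> 0}" by simp
        have "card {i. i < N \<and> e2 i \<noteq> 0} \<le> card ({i. i < N \<and> e1 i \<noteq> 0} - {j})"
          by (rule card_mono) (use fin sub in auto)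
        also have "\<dots> < card {i. i < N \<and> e1 i \<noteq> 0}"
          by (rule card_Diff1_less) (use fin jN e1j in auto)
        finally have "card {i. i < N \<and> e2 i \<noteq> 0} < s"
          using cs supp1 by simp
        then have "\<forall>i<N. e2 i = 0" using less az2 by blast
        then show "e1 i * w = w * e1 i" using iN by (simp add: e2_def)
      qed
      have "(\<Sum>i<N. e1 i * a ^ i) = 0" using z1[of 1] by (simp add: alpha_def)
      then have "\<forall>i<N. e1 i = 0" using indep cent by blast
      then show False using jN e1j by simp
    qed
  qed
qed

lemma alpha_zero_e: "(\<And>y. alpha e y = 0) \<Longrightarrow> j < N \<Longrightarrow> e j = 0"
  using alpha_zero_e_aux by blast

definition span :: "nat \<Rightarrow> (nat \<Rightarrow> 'a) \<Rightarrow> 'a set" where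
  "span m xs = {y. \<exists>k. (\<forall>i<m. k i * a = a * k i) \<and> y = (\<Sum>i<m. xs i * k i)}"

lemma AL: "(\<And>e. (\<forall>i<m. alpha e (xs i) = 0) \<Longrightarrow> alpha e x = 0) \<Longrightarrow> x \<in> span m xs"
proof (induction m arbitrary: x)
  case 0
  have "x = 0" using 0[of "\<lambda>j. if j = 0 then 1 else 0"] by (simp add: alpha_id)
  then show ?case by (simp add: span_def)
next
  case (Suc m)
  show ?case
  proof (cases "\<forall>e. (\<forall>i<m. alpha e (xs i) = 0) \<longrightarrow> alpha e (xs m) = 0")
    case True
    have "x \<in> span m xs"
      by (rule Suc.IH) (metis Suc.prems True less_Suc_eq)
    then obtain k where k: "\<forall>i<m. k i * a = a * k i" "x = (\<Sum>i<m. xs i * k i)"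
      by (auto simp: span_def)
    show ?thesis unfolding span_def
      by (rule CollectI, rule exI[of _ "k(m := 0)"]) (use k in auto)
  next
    case False
    then obtain e0 where e0: "\<forall>i<m. alpha e0 (xs i) = 0" and zne: "alpha e0 (xs m) \<noteq> 0" by blast
    define z where "z = alpha e0 (xs m)"
    define k where "k = inverse z * alpha e0 x"
    have zk: "z * k = alpha e0 x" using zne by (simp add: k_def z_def mult.assoc[symmetric])
    have C1: "alpha e x = alpha e (xs m) * k" if ek: "\<forall>i<m. alpha e (xs i) = 0" for e
    proof -
      define c where "c = alpha e (xs m) * inverse z"
      define e' where "e' j = e j - c * e0 j" for j
      have ae': "alpha e' y = alpha e y - c * alpha e0 y" for y
        unfolding e'_def by (simp add: alpha_diff_e alpha_smul)
      have "\<forall>i<Suc m. alpha e' (xs i) = 0"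
      proof (intro allI impI)
        fix i assume "i < Suc m"
        then consider "i < m" | "i = m" by linarith
        then show "alpha e' (xs i) = 0"
        proof cases
          case 1 then show ?thesis using ek e0 ae' by simp
        next
          case 2 then show ?thesis using ae' zne by (simp add: c_def z_def mult.assoc)
        qed
      qed
      then have "alpha e' x = 0" using Suc.prems by blast
      then have "alpha e x = c * alpha e0 x" using ae' by simp
      then show ?thesis by (simp add: c_def k_def mult.assoc)
    qed
    obtain e1 where e1: "\<forall>y. alpha e0 y * a = alpha e1 y" using alpha_ra by blast
    have "alpha e1 x = alpha e1 (xs m) * k"
      by (rule C1) (metis e0 e1 mult_zero_left)
    then have "z * k * a = z * a * k" using e1 zk by (metis z_def)
    then have "inverse z * (z * (k * a)) = inverse z * (z * (a * k))" by (simp add: mult.assoc)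
    then have kK: "k * a = a * k" using zne by (simp add: z_def mult.assoc[symmetric])
    have "x - xs m * k \<in> span m xs"
    proof (rule Suc.IH)
      fix e assume "\<forall>i<m. alpha e (xs i) = 0"
      then show "alpha e (x - xs m * k) = 0"
        using C1 by (simp add: alpha_diff_y alpha_rK[OF kK])
    qed
    then obtain k' where k': "\<forall>i<m. k' i * a = a * k' i" "x - xs m * k = (\<Sum>i<m. xs i * k' i)"
      by (auto simp: span_def)
    have "x = (\<Sum>i<Suc m. xs i * (k'(m := k)) i)"
    proof -
      have "x = (\<Sum>i<m. xs i * k' i) + xs m * k" using k'(2) by (metis diff_add_cancel)
      then show ?thesis by simp
    qed
    moreover have "\<forall>i<Suc m. (k'(m := k)) i * a = a * (k'(m := k)) i" using k'(1) kK by auto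
    ultimately show ?thesis unfolding span_def by (intro CollectI exI[of _ "k'(m := k)"] conjI)
  qed
qed


definition ann :: "nat \<Rightarrow> (nat \<Rightarrow> 'a) \<Rightarrow> (nat \<Rightarrow> 'a) set" where
  "ann m xs = {e. \<forall>i<m. alpha e (xs i) = 0}"

definition lead :: "(nat \<Rightarrow> 'a) set \<Rightarrow> nat set" where
  "lead W = {j. j < N \<and> (\<exists>e\<in>W. e j \<noteq> 0 \<and> (\<forall>i<j. e i = 0))}"

lemma ann_diff: "e \<in> ann m xs \<Longrightarrow> e' \<in> ann m xs \<Longrightarrow> (\<lambda>j. e j - c * e' j) \<in> ann m xs"
  by (simp add: ann_def alpha_diff_e alpha_smul)
lemma ann_add: "e \<in> ann m xs \<Longrightarrow> e' \<in> ann m xs \<Longrightarrow> (\<lambda>j. e j + c * e' j) \<in> ann m xs"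
  by (simp add: ann_def alpha_add_e alpha_smul)
lemma ann_zero: "(\<lambda>j. 0) \<in> ann m xs"
  by (simp add: ann_def alpha_def)

lemma lead_eq:
  assumes sub: "W' \<subseteq> W"
    and cl: "\<And>e e' c. e \<in> W \<Longrightarrow> e' \<in> W \<Longrightarrow> (\<lambda>j. e j - c * e' j) \<in> W"
    and cl': "\<And>e e' c. e \<in> W' \<Longrightarrow> e' \<in> W' \<Longrightarrow> (\<lambda>j. e j + c * e' j) \<in> W'"
    and z': "(\<lambda>j. 0) \<in> W'"
    and le: "lead W' = lead W"
  shows "\<forall>t. N - t = d \<longrightarrow> (\<forall>e\<in>W. (\<forall>i<t. e i = 0) \<longrightarrow> (\<exists>e'\<in>W'. \<forall>j<N. e j = e' j))"
proof (induction d)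
  case 0
  show ?case
  proof (intro allI impI ballI)
    fix t e assume "N - t = 0" "e \<in> W" "\<forall>i<t. e i = 0"
    then show "\<exists>e'\<in>W'. \<forall>j<N. e j = e' j" using z' by (intro bexI[of _ "\<lambda>j. 0"]) auto
  qed
next
  case (Suc d)
  show ?case
  proof (intro allI impI ballI)
    fix t e assume td: "N - t = Suc d" and eW: "e \<in> W" and ez: "\<forall>i<t. e i = 0"
    have tN: "t < N" and td': "N - Suc t = d" using td by auto
    show "\<exists>e'\<in>W'. \<forall>j<N. e j = e' j"
    proof (cases "e t = 0")
      case True
      then have "\<forall>i<Suc t. e i = 0" using ez less_Suc_eq by auto
      then show ?thesis using Suc.IH td' eW by blast
    next
      case False
      then have "t \<in> lead W" using tN eW ez by (auto simp: lead_def)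
      then have "t \<in> lead W'" using le by simp
      then obtain v where vW: "v \<in> W'" and vt: "v t \<noteq> 0" and vz: "\<forall>i<t. v i = 0"
        by (auto simp: lead_def)
      define c where "c = e t * inverse (v t)"
      define w where "w = (\<lambda>j. e j - c * v j)"
      have wW: "w \<in> W" unfolding w_def using cl eW vW sub by blast
      have "\<forall>i<Suc t. w i = 0"
      proof (intro allI impI)
        fix i assume "i < Suc t"
        then consider "i < t" | "i = t" by linarith
        then show "w i = 0"
        proof cases
          case 1 then show ?thesis using ez vz by (simp add: w_def)
        next
          case 2 then show ?thesis using vt by (simp add: w_def c_def mult.assoc)
        qed
      qed
      then obtain w' where w'W: "w' \<in> W'" and ww: "\<forall>j<N. w j = w' j"
        using Suc.IH td' wW by blast
      show ?thesis
      proof (rule bexI[of _ "\<lambda>j. w' j + c * v j"])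
        show "(\<lambda>j. w' j + c * v j) \<in> W'" using cl' w'W vW by blast
        show "\<forall>j<N. e j = w' j + c * v j"
        proof (intro allI impI)
          fix j assume "j < N"
          then have "e j - c * v j = w' j" using ww by (simp add: w_def)
          then show "e j = w' j + c * v j" by (metis diff_add_cancel)
        qed
      qed
    qed
  qed
qed

lemma fin_span: "\<exists>m xs. \<forall>x. x \<in> span m xs"
proof -
  obtain p where pmin: "\<forall>q. card (lead (ann (fst p) (snd p))) \<le> card (lead (ann (fst q) (snd q)))"
    using ex_has_least_nat[of "\<lambda>_. True" "(0, \<lambda>_. 0)" "\<lambda>q. card (lead (ann (fst q) (snd q)))"] by blast
  define m where "m = fst p"
  define xs where "xs = snd p"
  have min: "card (lead (ann m xs)) \<le> card (lead (ann m' xs'))" for m' xs'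
    using pmin[rule_format, of "(m', xs')"] by (simp add: m_def xs_def)
  have "x \<in> span m xs" for x
  proof (rule ccontr)
    assume nx: "x \<notin> span m xs"
    obtain e where eA: "e \<in> ann m xs" and ex: "alpha e x \<noteq> 0"
      using AL[of m xs x] nx by (auto simp: ann_def)
    define xs' where "xs' = xs(m := x)"
    have sub: "ann (Suc m) xs' \<subseteq> ann m xs"
      by (auto simp: ann_def xs'_def)
    have lsub: "lead (ann (Suc m) xs') \<subseteq> lead (ann m xs)"
      using sub unfolding lead_def by blast
    have "lead (ann (Suc m) xs') \<noteq> lead (ann m xs)"
    proof
      assume le: "lead (ann (Suc m) xs') = lead (ann m xs)"
      have "\<exists>e'\<in>ann (Suc m) xs'. \<forall>j<N. e j = e' j"
        by (rule lead_eq[OF sub ann_diff ann_add ann_zero le, where d=N, rule_format, of 0 e]) (use eA in auto)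
      then obtain e' where e'A: "e' \<in> ann (Suc m) xs'" and ee: "\<forall>j<N. e j = e' j"
        using eA by blast
      have "alpha e' (xs' m) = 0" using e'A unfolding ann_def by blast
      then have "alpha e' x = 0" by (simp add: xs'_def)
      moreover have "alpha e x = alpha e' x" using ee by (intro alpha_cong) auto
      ultimately show False using ex by simp
    qed
    then have "lead (ann (Suc m) xs') \<subset> lead (ann m xs)" using lsub by blast
    moreover have "finite (lead (ann m xs))" by (simp add: lead_def)
    ultimately have "card (lead (ann (Suc m) xs')) < card (lead (ann m xs))"
      by (rule psubset_card_mono[rotated])
    then show False using min[of "Suc m" xs'] by simp
  qed
  then show ?thesis by blast
qed

lemma realize: fixes m :: nat assumes kK: "k * a = a * k" shows "\<exists>e. \<forall>i<m. alpha e (xs i) = xs i * k"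
proof (induction m)
  case 0 then show ?case by simp
next
  case (Suc m)
  then obtain e0 where e0: "\<forall>i<m. alpha e0 (xs i) = xs i * k" by blast
  show ?case
  proof (cases "xs m \<in> span m xs")
    case True
    then obtain h where h: "\<forall>i<m. h i * a = a * h i" "xs m = (\<Sum>i<m. xs i * h i)"
      by (auto simp: span_def)
    have "alpha e0 (xs m) = (\<Sum>i<m. alpha e0 (xs i) * h i)"
      by (subst h(2), simp add: alpha_sum_y alpha_rK h(1))
    also have "\<dots> = (\<Sum>i<m. xs i * h i * k)"
      by (rule sum.cong) (simp_all add: e0 mult.assoc Kcomm[OF kK h(1)[rule_format]])
    also have "\<dots> = xs m * k" by (simp add: h(2) sum_distrib_right)
    finally have "alpha e0 (xs m) = xs m * k" .
    then show ?thesis using e0 less_Suc_eq by (intro exI[of _ e0]) auto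
  next
    case False
    then obtain e1 where e1: "\<forall>i<m. alpha e1 (xs i) = 0" and z: "alpha e1 (xs m) \<noteq> 0"
      using AL[of m xs "xs m"] by blast
    define d where "d = (xs m * k - alpha e0 (xs m)) * inverse (alpha e1 (xs m))"
    have ae: "alpha (\<lambda>j. e0 j + d * e1 j) y = alpha e0 y + d * alpha e1 y" for y
      by (simp add: alpha_add_e alpha_smul)
    have "\<forall>i<Suc m. alpha (\<lambda>j. e0 j + d * e1 j) (xs i) = xs i * k"
    proof (intro allI impI)
      fix i assume "i < Suc m"
      then consider "i < m" | "i = m" by linarith
      then show "alpha (\<lambda>j. e0 j + d * e1 j) (xs i) = xs i * k"
      proof cases
        case 1 then show ?thesis using ae e0 e1 by simp
      next
        case 2 then show ?thesis using ae z by (simp add: d_def mult.assoc)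
      qed
    qed
    then show ?thesis by blast
  qed
qed

lemma K_in_P: assumes kK: "k * a = a * k"
  shows "\<exists>c. (\<forall>j<N. c j \<in> center) \<and> k = (\<Sum>j<N. c j * a ^ j)"
proof -
  obtain m xs where sp: "\<forall>x. x \<in> span m xs" using fin_span by blast
  obtain e where e: "\<forall>i<m. alpha e (xs i) = xs i * k" using realize[OF kK] by blast
  have ey: "alpha e y = y * k" for y
  proof -
    obtain h where h: "\<forall>i<m. h i * a = a * h i" "y = (\<Sum>i<m. xs i * h i)"
      using sp by (auto simp: span_def)
    have "alpha e y = (\<Sum>i<m. alpha e (xs i) * h i)"
      by (subst h(2), simp add: alpha_sum_y alpha_rK h(1))
    also have "\<dots> = (\<Sum>i<m. xs i * h i * k)"
      by (rule sum.cong) (simp_all add: e mult.assoc Kcomm[OF kK h(1)[rule_format]])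
    also have "\<dots> = y * k" by (simp add: h(2) sum_distrib_right)
    finally show ?thesis .
  qed
  have cen: "e j \<in> center" if jN: "j < N" for j
  proof (rule centerI)
    fix z
    show "e j * z = z * e j"
    proof (cases "z = 0")
      case True then show ?thesis by simp
    next
      case False
      have "alpha (\<lambda>j. e j - inverse z * e j * z) y = 0" for y
      proof -
        have "alpha (\<lambda>j. inverse z * e j * z) y = inverse z * alpha e (z * y)"
          by (simp add: alpha_def sum_distrib_left mult.assoc)
        also have "\<dots> = y * k" using False by (simp add: ey mult.assoc[symmetric])
        finally show ?thesis by (simp add: alpha_diff_e ey)
      qed
      then have "e j - inverse z * e j * z = 0" using alpha_zero_e jN by blast
      then have "z * e j = z * (inverse z * e j * z)" by simp
      also have "\<dots> = e j * z" using False by (simp add: mult.assoc[symmetric])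
      finally show ?thesis by simp
    qed
  qed
  have "k = (\<Sum>j<N. e j * a ^ j)" using ey[of 1] by (simp add: alpha_def)
  then show ?thesis using cen by blast
qed

end

lemma deg_exists: fixes a :: "'a::division_ring"
  assumes "\<forall>i<n. c i \<in> center" "(\<Sum>i<n. c i * a ^ i) = 0" "\<exists>i<n. c i \<noteq> 0"
  shows "\<exists>t<n. c t \<noteq> 0 \<and> (\<forall>i\<le>t. c i \<in> center) \<and> (\<Sum>i\<le>t. c i * a ^ i) = 0"
proof -
  define T where "T = {i. i < n \<and> c i \<noteq> 0}"
  have fT: "finite T" and neT: "T \<noteq> {}" using assms(3) by (auto simp: T_def)
  define t where "t = Max T"
  have tT: "t \<in> T" using fT neT by (simp add: t_def)
  have tmax: "i \<in> T \<Longrightarrow> i \<le> t" for i using fT by (simp add: t_def)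
  have tn: "t < n" and ct: "c t \<noteq> 0" using tT by (auto simp: T_def)
  have "(\<Sum>i\<le>t. c i * a ^ i) = (\<Sum>i<n. c i * a ^ i)"
  proof (rule sum.mono_neutral_left)
    show "{..t} \<subseteq> {..<n}" using tn by auto
    show "\<forall>i\<in>{..<n} - {..t}. c i * a ^ i = 0"
    proof
      fix i assume "i \<in> {..<n} - {..t}"
      then have "i < n" "\<not> i \<le> t" by auto
      then have "c i = 0" using tmax by (auto simp: T_def)
      then show "c i * a ^ i = 0" by simp
    qed
  qed simp
  then show ?thesis using assms tn ct by (intro exI[of _ t]) auto
qed

theorem lemma2p9:
  fixes M :: "'a::division_ring set" and a :: 'a
  assumes noncomm: "\<exists>x y::'a. x * y \<noteq> y * x"
    and max: "maximal_mult_subgroup M"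
    and aM: "a \<in> M" and aF: "a \<notin> center"
    and alg: "algebraic_over_center a"
    and abel: "\<forall>x\<in>M. \<forall>y\<in>M. x * y = y * x"
  shows "finite_dim_over_center TYPE('a)"
proof -
  define C where "C = {x::'a. x \<noteq> 0 \<and> x * a = a * x}"
  have Msub: "M \<subseteq> units_set" using max by (simp add: maximal_mult_subgroup_def mult_subgroup_def)
  have MC: "M \<subseteq> C"
  proof
    fix x assume "x \<in> M"
    then show "x \<in> C" using Msub abel aM by (auto simp: C_def units_set_def)
  qed
  have sgC: "mult_subgroup C"
    unfolding mult_subgroup_def
  proof (intro conjI ballI)
    show "C \<subseteq> units_set" by (auto simp: C_def units_set_def)
    show "1 \<in> C" by (simp add: C_def)
    fix x assume x: "x \<in> C"
    show "inverse x \<in> C" using x commute_inverse by (auto simp: C_def)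
    fix y assume y: "y \<in> C"
    have xa: "x * a = a * x" and ya: "y * a = a * y" using x y by (auto simp: C_def)
    have "x * y * a = x * (a * y)" using ya by (simp add: mult.assoc)
    also have "\<dots> = a * (x * y)" using xa by (simp add: mult.assoc[symmetric])
    finally have "x * y * a = a * (x * y)" .
    then show "x * y \<in> C" using x y by (simp add: C_def)
  qed
  have CU: "C \<noteq> units_set"
  proof
    assume "C = units_set"
    then have yC: "y \<noteq> 0 \<Longrightarrow> y \<in> C" for y by (simp add: units_set_def)
    have "a * y = y * a" for y
    proof (cases "y = 0")
      case False then show ?thesis using yC[OF False] by (simp add: C_def)
    qed simp
    then show False using aF by (simp add: center_def)
  qed
  have CM: "C = M" using max sgC MC CU by (simp add: maximal_mult_subgroup_def)
  have Kcomm: "k1 * k2 = k2 * k1" if "k1 * a = a * k1" "k2 * a = a * k2" for k1 k2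
  proof (cases "k1 = 0 \<or> k2 = 0")
    case True then show ?thesis by auto
  next
    case False
    then have "k1 \<in> M" "k2 \<in> M" using that CM by (auto simp: C_def)
    then show ?thesis using abel by blast
  qed
  define Deg where "Deg = {d. \<exists>c. (\<forall>i\<le>d. c i \<in> center) \<and> c d \<noteq> 0 \<and> (\<Sum>i\<le>d. c i * a ^ i) = 0}"
  obtain n c where c: "\<forall>i\<le>n. c i \<in> center" "\<exists>i\<le>n. c i \<noteq> 0" "(\<Sum>i\<le>n. c i * a ^ i) = 0"
    using alg by (auto simp: algebraic_over_center_def)
  have "\<exists>t<Suc n. c t \<noteq> 0 \<and> (\<forall>i\<le>t. c i \<in> center) \<and> (\<Sum>i\<le>t. c i * a ^ i) = 0"
    by (rule deg_exists) (use c in \<open>auto simp: lessThan_Suc_atMost less_Suc_eq_le\<close>)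
  then have "Deg \<noteq> {}" by (auto simp: Deg_def)
  define N where "N = (LEAST d. d \<in> Deg)"
  have "N \<in> Deg" unfolding N_def using \<open>Deg \<noteq> {}\<close> by (auto intro: LeastI)
  then obtain p where p: "\<forall>i\<le>N. p i \<in> center" "p N \<noteq> 0" "(\<Sum>i\<le>N. p i * a ^ i) = 0"
    by (auto simp: Deg_def)
  have Nmin: "d \<in> Deg \<Longrightarrow> N \<le> d" for d unfolding N_def by (rule Least_le)
  have N1: "N \<ge> 1"
  proof (rule ccontr)
    assume "\<not> N \<ge> 1"
    then have "N = 0" by simp
    then show False using p by simp
  qed
  define b where "b j = (if j \<le> N then - (inverse (p N) * p j) else 0)" for j
  have bc: "b j \<in> center" for j
  proof (cases "j \<le> N")
    case True then show ?thesis using p by (simp add: b_def center_uminus center_mult center_inverse)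
  next
    case False
    then show ?thesis by (simp add: b_def center_def)
  qed
  have red: "a ^ N = (\<Sum>j<N. b j * a ^ j)"
  proof -
    have "(\<Sum>i<N. p i * a ^ i) + p N * a ^ N = 0"
      using p(3) by (simp add: lessThan_Suc_atMost[symmetric])
    then have "p N * a ^ N = - (\<Sum>i<N. p i * a ^ i)" by (simp add: add_eq_0_iff add.commute)
    have "a ^ N = (inverse (p N) * p N) * a ^ N" using p(2) by simp
    also have "\<dots> = inverse (p N) * (p N * a ^ N)" by (rule mult.assoc)
    also have "\<dots> = inverse (p N) * - (\<Sum>i<N. p i * a ^ i)" using \<open>p N * a ^ N = _\<close> by (rule arg_cong)
    also have "\<dots> = - (inverse (p N) * (\<Sum>i<N. p i * a ^ i))" by (rule mult_minus_right)
    also have "inverse (p N) * (\<Sum>i<N. p i * a ^ i) = (\<Sum>i<N. inverse (p N) * (p i * a ^ i))"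
      by (rule sum_distrib_left)
    also have "\<dots> = (\<Sum>i<N. inverse (p N) * p i * a ^ i)"
      by (simp only: mult.assoc)
    finally have "a ^ N = - (\<Sum>i<N. inverse (p N) * p i * a ^ i)" .
    moreover have "(\<Sum>j<N. b j * a ^ j) = (\<Sum>j<N. - (inverse (p N) * p j) * a ^ j)"
      by (rule sum.cong) (auto simp: b_def)
    moreover have "(\<Sum>j<N. - (inverse (p N) * p j) * a ^ j) = - (\<Sum>j<N. inverse (p N) * p j * a ^ j)"
      by (simp only: mult_minus_left sum_negf)
    ultimately show ?thesis by simp
  qed
  have indep: "\<forall>j<N. c j = 0" if cc: "\<forall>j<N. c j \<in> center" "(\<Sum>j<N. c j * a ^ j) = 0" for c
  proof (rule ccontr)
    assume "\<not> (\<forall>j<N. c j = 0)"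
    then obtain t where "t < N" "c t \<noteq> 0" "\<forall>i\<le>t. c i \<in> center" "(\<Sum>i\<le>t. c i * a ^ i) = 0"
      using deg_exists[of N c a] cc by blast
    then have "t \<in> Deg" unfolding Deg_def by blast
    then show False using Nmin \<open>t < N\<close> by fastforce
  qed
  interpret S: setting a N b
  proof unfold_locales
    show "1 \<le> N" by (rule N1)
    show "b j \<in> center" for j by (rule bc)
    show "a ^ N = (\<Sum>j<N. b j * a ^ j)" by (rule red)
    show "\<forall>j<N. c j = 0" if "\<forall>j<N. c j \<in> center" "(\<Sum>j<N. c j * a ^ j) = 0" for c
      by (rule indep[OF that])
    show "k1 * k2 = k2 * k1" if "k1 * a = a * k1" "k2 * a = a * k2" for k1 k2
      by (rule Kcomm[OF that])
  qed
  obtain m xs where sp: "\<forall>x. x \<in> S.span m xs" using S.fin_span by blast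
  define g where "g = (\<lambda>(i, j). xs i * a ^ j)"
  define P where "P = {..<m} \<times> {..<N}"
  have fP: "finite P" by (simp add: P_def)
  show ?thesis unfolding finite_dim_over_center_def
  proof (rule exI[of _ "g ` P"], intro conjI allI)
    show "finite (g ` P)" using fP by simp
    fix x
    obtain h where h: "\<forall>i<m. h i * a = a * h i" "x = (\<Sum>i<m. xs i * h i)"
      using sp by (auto simp: S.span_def)
    have "\<forall>i. \<exists>ci. i < m \<longrightarrow> (\<forall>j<N. ci j \<in> center) \<and> h i = (\<Sum>j<N. ci j * a ^ j)"
      using S.K_in_P h(1) by blast
    then obtain cc where cc: "\<And>i j. i < m \<Longrightarrow> j < N \<Longrightarrow> cc i j \<in> center"
      "\<And>i. i < m \<Longrightarrow> h i = (\<Sum>j<N. cc i j * a ^ j)"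
      by metis
    define e where "e = (\<lambda>(i, j). cc i j)"
    have x1: "x = (\<Sum>q\<in>P. e q * g q)"
    proof -
      have "x = (\<Sum>i<m. \<Sum>j<N. cc i j * (xs i * a ^ j))"
        unfolding h(2)
      proof (rule sum.cong[OF refl])
        fix i assume "i \<in> {..<m}"
        then have im: "i < m" by simp
        have "xs i * h i = (\<Sum>j<N. xs i * (cc i j * a ^ j))"
          by (simp add: cc(2)[OF im] sum_distrib_left)
        also have "\<dots> = (\<Sum>j<N. cc i j * (xs i * a ^ j))"
          by (rule sum.cong[OF refl]) (metis cc(1)[OF im] centerD lessThan_iff mult.assoc)
        finally show "xs i * h i = (\<Sum>j<N. cc i j * (xs i * a ^ j))" .
      qed
      also have "\<dots> = (\<Sum>q\<in>P. e q * g q)"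
        by (simp add: P_def e_def g_def sum.cartesian_product split_def)
      finally show ?thesis .
    qed
    define cs where "cs s = (\<Sum>q\<in>{q\<in>P. g q = s}. e q)" for s
    have "x = (\<Sum>s\<in>g ` P. \<Sum>q\<in>{q\<in>P. g q = s}. e q * g q)"
      using x1 sum.image_gen[OF fP, of "\<lambda>q. e q * g q" g] by simp
    also have "\<dots> = (\<Sum>s\<in>g ` P. cs s * s)"
      by (rule sum.cong[OF refl]) (simp add: cs_def sum_distrib_right)
    finally have xs_eq: "x = (\<Sum>s\<in>g ` P. cs s * s)" .
    have "\<forall>s\<in>g ` P. cs s \<in> center"
      unfolding cs_def by (auto intro!: center_sum simp: e_def P_def cc(1))
    then show "\<exists>c. (\<forall>s\<in>g ` P. c s \<in> center) \<and> x = (\<Sum>s\<in>g ` P. c s * s)"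
      using xs_eq by blast
  qed
qed

end
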